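(* Let $(X,d)$ be a compact metric space and $f:X\to X$ continuous. If $(x,y)$ is a DC1-pair for $f$, then there exists $(z,w)\in\omega((x,y),f\times f)$ (so $(z,w)\in CR(f)^2$) such that $z\sim w$ and $(z,w)$ has property*.
   Context: A pair $(x,y)$ is a DC1-pair if $\limsup_{n}\frac1n|\{0\le i<n: d(f^i(x),f^i(y))<\delta\}|=1$ for every $\delta>0$ and $\limsup_{n}\frac1n|\{0\le i<n: d(f^i(x),f^i(y))>\delta_0\}|=1$ for some $\delta_0>0$. $\omega((x,y),f\times f)$ is the set of limit points of $(f^n(x),f^n(y))$ as $n\to\infty$. A $\delta$-chain of $f$ is a finite sequence $(x_i)_{i=0}^k$, $k\ge1$, with $d(f(x_i),x_{i+1})\le\delta$; a $\delta$-cycle is a $\delta$-chain with $x_0=x_k$. $CR(f)$ is the set of points $x$ such that for every $\delta>0$ there is a $\delta$-cycle starting and ending at $x$. For $x,y\in CR(f)$, $x\sim y$ iff for every $\delta>0$ there are integers $m>0$, $N>0$ such that for every $n\ge N$ there are $\delta$-chains $(x_i)_{i=0}^{mn},(y_i)_{i=0}^{mn}$ in $CR(f)$ with $x_0=y_{mn}=x$, $x_{mn}=y_0=y$. A pair $(x,y)\in CR(f)^2$ has property* if there is $r>0$ such that for every $\delta>0$ there are $\delta$-cycles $(x_i)_{i=0}^k,(y_i)_{i=0}^k$ of $f$ in $CR(f)$ of the same length with $x_0=x_k=x$, $y_0=y_k=y$ and $d(x_i,y_i)>r$ for all $0\le i\le k$. *)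

theory Defs
  imports "HOL-Analysis.Analysis" "HOL-Library.Liminf_Limsup"
begin

definition DC1_pair :: "('a::metric_space \<Rightarrow> 'a) \<Rightarrow> 'a \<Rightarrow> 'a \<Rightarrow> bool" where
  "DC1_pair f x y \<longleftrightarrow>
     (\<forall>\<delta>>0. limsup (\<lambda>n. ereal (real (card {i. i < n \<and> dist ((f ^^ i) x) ((f ^^ i) y) < \<delta>}) / real n)) = 1)
   \<and> (\<exists>\<delta>0>0. limsup (\<lambda>n. ereal (real (card {i. i < n \<and> dist ((f ^^ i) x) ((f ^^ i) y) > \<delta>0}) / real n)) = 1)"

definition omega_pair :: "('a::metric_space \<Rightarrow> 'a) \<Rightarrow> 'a \<Rightarrow> 'a \<Rightarrow> ('a \<times> 'a) set" where
  "omega_pair f x y = {p. \<exists>r::nat \<Rightarrow> nat. strict_mono r \<and>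
      ((\<lambda>n. ((f ^^ r n) x, (f ^^ r n) y)) \<longlonglongrightarrow> p)}"

definition chain_in :: "('a::metric_space \<Rightarrow> 'a) \<Rightarrow> 'a set \<Rightarrow> real \<Rightarrow> nat \<Rightarrow> (nat \<Rightarrow> 'a) \<Rightarrow> bool" where
  "chain_in f S \<delta> k c \<longleftrightarrow> 1 \<le> k \<and> (\<forall>i\<le>k. c i \<in> S) \<and>
      (\<forall>i<k. dist (f (c i)) (c (Suc i)) \<le> \<delta>)"

definition CR :: "('a::metric_space \<Rightarrow> 'a) \<Rightarrow> 'a set \<Rightarrow> 'a set" where
  "CR f X = {x \<in> X. \<forall>\<delta>>0. \<exists>k c. chain_in f X \<delta> k c \<and> c 0 = x \<and> c k = x}"

definition CR_equiv :: "('a::metric_space \<Rightarrow> 'a) \<Rightarrow> 'a set \<Rightarrow> 'a \<Rightarrow> 'a \<Rightarrow> bool" where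
  "CR_equiv f X x y \<longleftrightarrow> x \<in> CR f X \<and> y \<in> CR f X \<and>
     (\<forall>\<delta>>0. \<exists>m>0. \<exists>N>0. \<forall>n\<ge>N. \<exists>c d.
        chain_in f (CR f X) \<delta> (m * n) c \<and> chain_in f (CR f X) \<delta> (m * n) d \<and>
        c 0 = x \<and> c (m * n) = y \<and> d 0 = y \<and> d (m * n) = x)"

definition property_star :: "('a::metric_space \<Rightarrow> 'a) \<Rightarrow> 'a set \<Rightarrow> 'a \<Rightarrow> 'a \<Rightarrow> bool" where
  "property_star f X x y \<longleftrightarrow> x \<in> CR f X \<and> y \<in> CR f X \<and>
     (\<exists>r>0. \<forall>\<delta>>0. \<exists>k c d.
        chain_in f (CR f X) \<delta> k c \<and> chain_in f (CR f X) \<delta> k d \<and>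
        c 0 = x \<and> c k = x \<and> d 0 = y \<and> d k = y \<and> (\<forall>i\<le>k. dist (c i) (d i) > r))"

end

theory Submission
  imports Defs
begin


lemma iter_in: "f ` X \<subseteq> X \<Longrightarrow> x \<in> X \<Longrightarrow> (f ^^ n) x \<in> X"
  by (induction n) auto

lemma iter_cont: assumes "continuous_on X f" "f ` X \<subseteq> X" shows "continuous_on X (f ^^ n)"
proof (induction n)
  case 0 then show ?case by (simp add: continuous_on_id)
next
  case (Suc n)
  have "(f ^^ n) ` X \<subseteq> X" using iter_in[OF assms(2)] by auto
  then have "continuous_on X (f \<circ> (f ^^ n))"
    using continuous_on_compose[OF Suc] continuous_on_subset[OF assms(1)] by blast
  then show ?case by simp
qed

lemma LIMSEQ_inv_Suc:
  fixes X :: "nat \<Rightarrow> 'a::metric_space"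
  assumes "\<And>k. dist (X k) L < inverse (real (Suc k))" shows "X \<longlonglongrightarrow> L"
proof (rule metric_LIMSEQ_I)
  fix e :: real assume "e > 0"
  then obtain k0 where k0: "inverse (real (Suc k0)) < e" using reals_Archimedean by blast
  show "\<exists>no. \<forall>n\<ge>no. dist (X n) L < e"
  proof (intro exI allI impI)
    fix n assume "k0 \<le> n"
    then have "inverse (real (Suc n)) \<le> inverse (real (Suc k0))" by (simp add: le_imp_inverse_le)
    then show "dist (X n) L < e" using assms[of n] k0 by linarith
  qed
qed

lemma omega_pair_iff:
  "p \<in> omega_pair f x y \<longleftrightarrow>
    (\<forall>e>0. \<forall>N. \<exists>n\<ge>N. dist ((f ^^ n) x) (fst p) < e \<and> dist ((f ^^ n) y) (snd p) < e)"
proof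
  assume "p \<in> omega_pair f x y"
  then obtain r where r: "strict_mono r" "(\<lambda>n. ((f ^^ r n) x, (f ^^ r n) y)) \<longlonglongrightarrow> p"
    unfolding omega_pair_def by auto
  have t1: "(\<lambda>n. (f ^^ r n) x) \<longlonglongrightarrow> fst p" using tendsto_fst[OF r(2)] by simp
  have t2: "(\<lambda>n. (f ^^ r n) y) \<longlonglongrightarrow> snd p" using tendsto_snd[OF r(2)] by simp
  show "\<forall>e>0. \<forall>N. \<exists>n\<ge>N. dist ((f ^^ n) x) (fst p) < e \<and> dist ((f ^^ n) y) (snd p) < e"
  proof (intro allI impI)
    fix e :: real and N assume e: "e > 0"
    obtain n1 where n1: "\<forall>n\<ge>n1. dist ((f ^^ r n) x) (fst p) < e" using metric_LIMSEQ_D[OF t1 e] by blast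
    obtain n2 where n2: "\<forall>n\<ge>n2. dist ((f ^^ r n) y) (snd p) < e" using metric_LIMSEQ_D[OF t2 e] by blast
    define n where "n = max N (max n1 n2)"
    have "r n \<ge> N" using seq_suble[OF r(1), of n] n_def by linarith
    then show "\<exists>n\<ge>N. dist ((f ^^ n) x) (fst p) < e \<and> dist ((f ^^ n) y) (snd p) < e"
      using n1 n2 n_def by (intro exI[of _ "r n"]) auto
  qed
next
  assume H: "\<forall>e>0. \<forall>N. \<exists>n\<ge>N. dist ((f ^^ n) x) (fst p) < e \<and> dist ((f ^^ n) y) (snd p) < e"
  define P where "P = (\<lambda>k n. dist ((f ^^ n) x) (fst p) < inverse (real (Suc k)) \<and>
                              dist ((f ^^ n) y) (snd p) < inverse (real (Suc k)))"
  have "\<exists>r. \<forall>k. P k (r k) \<and> r k < r (Suc k)"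
  proof (rule dependent_nat_choice)
    show "\<exists>n. P 0 n" using H[rule_format, of "inverse (real (Suc 0))" 0] unfolding P_def by auto
    fix n k assume "P k n"
    show "\<exists>n'. P (Suc k) n' \<and> n < n'"
      using H[rule_format, of "inverse (real (Suc (Suc k)))" "Suc n"] unfolding P_def
      by (auto simp del: of_nat_Suc)
  qed
  then obtain r where r: "\<And>k. P k (r k)" "\<And>k. r k < r (Suc k)" by blast
  have sm: "strict_mono r" using r(2) strict_mono_Suc_iff by blast
  have "(\<lambda>n. (f ^^ r n) x) \<longlonglongrightarrow> fst p" by (rule LIMSEQ_inv_Suc) (use r(1) P_def in blast)
  moreover have "(\<lambda>n. (f ^^ r n) y) \<longlonglongrightarrow> snd p" by (rule LIMSEQ_inv_Suc) (use r(1) P_def in blast)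
  ultimately have "(\<lambda>n. ((f ^^ r n) x, (f ^^ r n) y)) \<longlonglongrightarrow> (fst p, snd p)" by (rule tendsto_Pair)
  then show "p \<in> omega_pair f x y" unfolding omega_pair_def using sm by auto
qed



lemma omega_sub:
  fixes f :: "'a::metric_space \<Rightarrow> 'a"
  assumes "compact X" "f ` X \<subseteq> X" "x \<in> X" "y \<in> X" "\<And>k. k \<le> t k"
  shows "\<exists>r a b. strict_mono r \<and> (\<lambda>j. (f ^^ t (r j)) x) \<longlonglongrightarrow> a \<and>
      (\<lambda>j. (f ^^ t (r j)) y) \<longlonglongrightarrow> b \<and> (a, b) \<in> omega_pair f x y \<and> a \<in> X \<and> b \<in> X"
proof -
  have sc: "seq_compact (X \<times> X)" using compact_imp_seq_compact compact_Times assms(1) by blast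
  have "\<forall>k. ((f ^^ t k) x, (f ^^ t k) y) \<in> X \<times> X" using iter_in[OF assms(2)] assms(3,4) by auto
  then obtain l r where l: "l \<in> X \<times> X" "strict_mono r"
     "((\<lambda>k. ((f ^^ t k) x, (f ^^ t k) y)) \<circ> r) \<longlonglongrightarrow> l"
    using sc unfolding seq_compact_def by meson
  have t1: "(\<lambda>j. (f ^^ t (r j)) x) \<longlonglongrightarrow> fst l" using tendsto_fst[OF l(3)] by (simp add: o_def)
  have t2: "(\<lambda>j. (f ^^ t (r j)) y) \<longlonglongrightarrow> snd l" using tendsto_snd[OF l(3)] by (simp add: o_def)
  have "(fst l, snd l) \<in> omega_pair f x y"
    unfolding omega_pair_iff
  proof (intro allI impI)
    fix e :: real and N assume e: "e > 0"
    obtain n1 where n1: "\<forall>n\<ge>n1. dist ((f ^^ t (r n)) x) (fst l) < e" using metric_LIMSEQ_D[OF t1 e] by blast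
    obtain n2 where n2: "\<forall>n\<ge>n2. dist ((f ^^ t (r n)) y) (snd l) < e" using metric_LIMSEQ_D[OF t2 e] by blast
    define n where "n = max N (max n1 n2)"
    have "t (r n) \<ge> N" using seq_suble[OF l(2), of n] n_def assms(5)[of "r n"] by linarith
    then show "\<exists>n\<ge>N. dist ((f ^^ n) x) (fst (fst l, snd l)) < e \<and> dist ((f ^^ n) y) (snd (fst l, snd l)) < e"
      using n1 n2 n_def by (intro exI[of _ "t (r n)"]) auto
  qed
  then show ?thesis using t1 t2 l by (intro exI[of _ r] exI[of _ "fst l"] exI[of _ "snd l"]) auto
qed

lemma omega_in_X:
  assumes "closed X" "f ` X \<subseteq> X" "x \<in> X" "y \<in> X" "p \<in> omega_pair f x y"
  shows "fst p \<in> X" "snd p \<in> X"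
proof -
  obtain r where r: "strict_mono r" "(\<lambda>n. ((f ^^ r n) x, (f ^^ r n) y)) \<longlonglongrightarrow> p"
    using assms(5) unfolding omega_pair_def by auto
  have t1: "(\<lambda>n. (f ^^ r n) x) \<longlonglongrightarrow> fst p" using tendsto_fst[OF r(2)] by simp
  have t2: "(\<lambda>n. (f ^^ r n) y) \<longlonglongrightarrow> snd p" using tendsto_snd[OF r(2)] by simp
  show "fst p \<in> X" by (rule closed_sequentially[OF assms(1) _ t1]) (rule iter_in[OF assms(2,3)])
  show "snd p \<in> X" by (rule closed_sequentially[OF assms(1) _ t2]) (rule iter_in[OF assms(2,4)])
qed

lemma omega_closed:
  assumes "\<And>e. e > 0 \<Longrightarrow> \<exists>q\<in>omega_pair f x y. dist (fst q) (fst p) < e \<and> dist (snd q) (snd p) < e"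
  shows "p \<in> omega_pair f x y"
  unfolding omega_pair_iff
proof (intro allI impI)
  fix e :: real and N assume e: "e > 0"
  then obtain q where q: "q \<in> omega_pair f x y" "dist (fst q) (fst p) < e/2" "dist (snd q) (snd p) < e/2"
    using assms[of "e/2"] by auto
  then obtain n where n: "n \<ge> N" "dist ((f ^^ n) x) (fst q) < e/2" "dist ((f ^^ n) y) (snd q) < e/2"
    using e unfolding omega_pair_iff by (meson half_gt_zero)
  have "dist ((f ^^ n) x) (fst p) < e" using dist_triangle[of "(f ^^ n) x" "fst p" "fst q"] n q by linarith
  moreover have "dist ((f ^^ n) y) (snd p) < e" using dist_triangle[of "(f ^^ n) y" "snd p" "snd q"] n q by linarith
  ultimately show "\<exists>n\<ge>N. dist ((f ^^ n) x) (fst p) < e \<and> dist ((f ^^ n) y) (snd p) < e" using n by auto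
qed

lemma omega_inv:
  assumes "closed X" "continuous_on X f" "f ` X \<subseteq> X" "x \<in> X" "y \<in> X" "(a, b) \<in> omega_pair f x y"
  shows "(f a, f b) \<in> omega_pair f x y"
proof -
  obtain r where r: "strict_mono r" "(\<lambda>n. ((f ^^ r n) x, (f ^^ r n) y)) \<longlonglongrightarrow> (a, b)"
    using assms(6) unfolding omega_pair_def by auto
  have t1: "(\<lambda>n. (f ^^ r n) x) \<longlonglongrightarrow> a" using tendsto_fst[OF r(2)] by simp
  have t2: "(\<lambda>n. (f ^^ r n) y) \<longlonglongrightarrow> b" using tendsto_snd[OF r(2)] by simp
  have ab: "a \<in> X" "b \<in> X" using omega_in_X[OF assms(1) assms(3-5) assms(6)] by auto
  have "(\<lambda>n. f ((f ^^ r n) x)) \<longlonglongrightarrow> f a"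
    by (rule continuous_on_tendsto_compose[OF assms(2) t1 ab(1)]) (use iter_in[OF assms(3)] assms in auto)
  moreover have "(\<lambda>n. f ((f ^^ r n) y)) \<longlonglongrightarrow> f b"
    by (rule continuous_on_tendsto_compose[OF assms(2) t2 ab(2)]) (use iter_in[OF assms(3)] assms in auto)
  ultimately have "(\<lambda>n. ((f ^^ Suc (r n)) x, (f ^^ Suc (r n)) y)) \<longlonglongrightarrow> (f a, f b)"
    by (simp add: tendsto_Pair)
  moreover have "strict_mono (\<lambda>n. Suc (r n))" using r(1) by (simp add: strict_mono_def)
  ultimately show ?thesis unfolding omega_pair_def by blast
qed

lemma omega_inv_iter:
  assumes "closed X" "continuous_on X f" "f ` X \<subseteq> X" "x \<in> X" "y \<in> X" "(a, b) \<in> omega_pair f x y"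
  shows "((f ^^ n) a, (f ^^ n) b) \<in> omega_pair f x y"
proof (induction n)
  case 0 then show ?case using assms(6) by simp
next
  case (Suc n) then show ?case using omega_inv[OF assms(1-5) Suc] by simp
qed

lemma eventually_near:
  fixes f :: "'a::metric_space \<Rightarrow> 'a"
  assumes "compact X" "f ` X \<subseteq> X" "x \<in> X" "y \<in> X" "e > 0"
  shows "\<exists>N. \<forall>n\<ge>N. \<exists>q\<in>omega_pair f x y. dist ((f ^^ n) x) (fst q) < e \<and> dist ((f ^^ n) y) (snd q) < e"
proof (rule ccontr)
  assume "\<not> ?thesis"
  then have "\<forall>N. \<exists>n. N \<le> n \<and> (\<forall>q\<in>omega_pair f x y. \<not> (dist ((f ^^ n) x) (fst q) < e \<and> dist ((f ^^ n) y) (snd q) < e))"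
    by blast
  from choice[OF this] obtain t where t0: "\<forall>N. N \<le> t N \<and> (\<forall>q\<in>omega_pair f x y. \<not> (dist ((f ^^ t N) x) (fst q) < e \<and> dist ((f ^^ t N) y) (snd q) < e))"
    by blast
  have t: "\<And>N. N \<le> t N" "\<And>N. \<forall>q\<in>omega_pair f x y. \<not> (dist ((f ^^ t N) x) (fst q) < e \<and> dist ((f ^^ t N) y) (snd q) < e)"
    using t0 by auto
  obtain r a b where rab: "strict_mono r" "(\<lambda>j. (f ^^ t (r j)) x) \<longlonglongrightarrow> a"
      "(\<lambda>j. (f ^^ t (r j)) y) \<longlonglongrightarrow> b" "(a, b) \<in> omega_pair f x y"
    using omega_sub[OF assms(1-4) t(1)] by blast
  obtain n1 where n1: "\<forall>n\<ge>n1. dist ((f ^^ t (r n)) x) a < e" using metric_LIMSEQ_D[OF rab(2) assms(5)] by blast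
  obtain n2 where n2: "\<forall>n\<ge>n2. dist ((f ^^ t (r n)) y) b < e" using metric_LIMSEQ_D[OF rab(3) assms(5)] by blast
  show False using t(2)[of "r (max n1 n2)", rule_format, OF rab(4)] n1 n2 by simp
qed



lemma orbit_chain:
  fixes f :: "'a::metric_space \<Rightarrow> 'a" and u v :: "nat \<Rightarrow> 'a"
  assumes uc: "\<And>p q. p \<in> X \<Longrightarrow> q \<in> X \<Longrightarrow> dist p q < e \<Longrightarrow> dist (f p) (f q) < \<delta>/2"
    and e: "e \<le> \<delta>/2"
    and uvX: "\<And>n. u n \<in> X" "\<And>n. v n \<in> X"
    and us: "\<And>n. u (Suc n) = f (u n)" and vs: "\<And>n. v (Suc n) = f (v n)"
    and near: "\<And>n. n \<ge> n1 \<Longrightarrow> \<exists>q\<in>S. dist (u n) (fst q) < e \<and> dist (v n) (snd q) < e"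
    and n12: "n1 < n2" and ab: "a \<in> S" "b \<in> S" and SX: "S \<subseteq> X \<times> X"
    and na: "dist (u n1) (fst a) < e" "dist (v n1) (snd a) < e"
    and nb: "dist (u n2) (fst b) < e" "dist (v n2) (snd b) < e"
  shows "\<exists>k c d. 1 \<le> k \<and> (\<forall>i\<le>k. (c i, d i) \<in> S) \<and>
     (\<forall>i<k. dist (f (c i)) (c (Suc i)) \<le> \<delta> \<and> dist (f (d i)) (d (Suc i)) \<le> \<delta>) \<and>
     c 0 = fst a \<and> d 0 = snd a \<and> c k = fst b \<and> d k = snd b"
proof -
  define sel where "sel n = (SOME q. q \<in> S \<and> dist (u n) (fst q) < e \<and> dist (v n) (snd q) < e)" for n
  have sel: "sel n \<in> S \<and> dist (u n) (fst (sel n)) < e \<and> dist (v n) (snd (sel n)) < e" if "n \<ge> n1" for n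
    unfolding sel_def by (rule someI_ex) (use near[OF that] in blast)
  define k where "k = n2 - n1"
  define P where "P i = (if i = 0 then a else if i = k then b else sel (n1 + i))" for i
  define c where "c i = fst (P i)" for i
  define d where "d i = snd (P i)" for i
  have key: "(c i, d i) \<in> S \<and> dist (u (n1 + i)) (c i) < e \<and> dist (v (n1 + i)) (d i) < e" if "i \<le> k" for i
  proof (cases "i = 0")
    case True then show ?thesis using ab na unfolding c_def d_def P_def by simp
  next
    case False
    show ?thesis
    proof (cases "i = k")
      case True then show ?thesis using ab nb False n12 unfolding c_def d_def P_def k_def by simp
    next
      case False2: False
      then show ?thesis using sel[of "n1 + i"] False unfolding c_def d_def P_def by simp
    qed
  qed
  have inX: "c i \<in> X" "d i \<in> X" if "i \<le> k" for i using key[OF that] SX by auto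
  have step: "dist (f (c i)) (c (Suc i)) \<le> \<delta> \<and> dist (f (d i)) (d (Suc i)) \<le> \<delta>" if "i < k" for i
  proof -
    have k1: "(c i, d i) \<in> S \<and> dist (u (n1 + i)) (c i) < e \<and> dist (v (n1 + i)) (d i) < e" using key that by simp
    have k2: "dist (u (n1 + Suc i)) (c (Suc i)) < e \<and> dist (v (n1 + Suc i)) (d (Suc i)) < e"
      using key[of "Suc i"] that by simp
    have "dist (f (c i)) (f (u (n1 + i))) < \<delta>/2"
      using uc[OF inX(1)[of i] uvX(1)] k1 that by (simp add: dist_commute)
    moreover have "dist (f (d i)) (f (v (n1 + i))) < \<delta>/2"
      using uc[OF inX(2)[of i] uvX(2)] k1 that by (simp add: dist_commute)
    moreover have "f (u (n1 + i)) = u (n1 + Suc i)" "f (v (n1 + i)) = v (n1 + Suc i)" using us vs by simp_all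
    ultimately show ?thesis
      using k2 e dist_triangle[of "f (c i)" "c (Suc i)" "u (n1 + Suc i)"]
        dist_triangle[of "f (d i)" "d (Suc i)" "v (n1 + Suc i)"] by simp
  qed
  have "c 0 = fst a" "d 0 = snd a" unfolding c_def d_def P_def by simp_all
  moreover have "c k = fst b" "d k = snd b" using n12 unfolding c_def d_def P_def k_def by simp_all
  moreover have "1 \<le> k" using n12 k_def by simp
  ultimately show ?thesis using key step by blast
qed

definition app_chain :: "nat \<Rightarrow> (nat \<Rightarrow> 'a) \<Rightarrow> (nat \<Rightarrow> 'a) \<Rightarrow> nat \<Rightarrow> 'a" where
  "app_chain k c d i = (if i \<le> k then c i else d (i - k))"

lemma chain_append:
  assumes "chain_in f S \<delta> k c" "chain_in f S \<delta> l d" "c k = d 0"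
  shows "chain_in f S \<delta> (k + l) (app_chain k c d)" "app_chain k c d 0 = c 0" "app_chain k c d (k + l) = d l"
proof -
  show "chain_in f S \<delta> (k + l) (app_chain k c d)"
    unfolding chain_in_def
  proof (intro conjI allI impI)
    show "1 \<le> k + l" using assms(1) unfolding chain_in_def by simp
    fix i assume "i \<le> k + l"
    then show "app_chain k c d i \<in> S" using assms unfolding chain_in_def app_chain_def by auto
  next
    fix i assume i: "i < k + l"
    show "dist (f (app_chain k c d i)) (app_chain k c d (Suc i)) \<le> \<delta>"
    proof (cases "i < k")
      case True then show ?thesis using assms(1) unfolding chain_in_def app_chain_def by auto
    next
      case False
      then have "i - k < l" "Suc i - k = Suc (i - k)" using i by auto
      then show ?thesis using assms(2,3) False unfolding chain_in_def app_chain_def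
        by (cases "i = k") auto
    qed
  qed
  show "app_chain k c d 0 = c 0" unfolding app_chain_def by simp
  show "app_chain k c d (k + l) = d l"
    using assms(3) unfolding app_chain_def by auto
qed

lemma chain_pow_append:
  assumes "chain_in f S \<delta> k c" "c 0 = x" "c k = x" "chain_in f S \<delta> l d" "d 0 = x"
  shows "\<exists>e. chain_in f S \<delta> (k * n + l) e \<and> e 0 = x \<and> e (k * n + l) = d l"
proof (induction n)
  case 0 then show ?case using assms by auto
next
  case (Suc n)
  then obtain e where e: "chain_in f S \<delta> (k * n + l) e" "e 0 = x" "e (k * n + l) = d l" by blast
  have "c k = e 0" using assms e by simp
  note A = chain_append[OF assms(1) e(1) this]
  have eq: "k * Suc n + l = k + (k * n + l)" by simp
  show ?case unfolding eq using A assms(2) e(3) by (intro exI[of _ "app_chain k c e"]) auto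
qed



lemma unif_get:
  assumes "compact X" "continuous_on X f" "(\<delta>::real) > 0"
  shows "\<exists>e>0. e \<le> \<delta>/2 \<and> (\<forall>p q. p \<in> X \<longrightarrow> q \<in> X \<longrightarrow> dist p q < e \<longrightarrow> dist (f p) (f q) < \<delta>/2)"
proof -
  have "uniformly_continuous_on X f" using compact_uniformly_continuous assms by blast
  then obtain \<eta> where \<eta>: "\<eta> > 0" "\<forall>x\<in>X. \<forall>x'\<in>X. dist x' x < \<eta> \<longrightarrow> dist (f x') (f x) < \<delta>/2"
    unfolding uniformly_continuous_on_def using assms(3) by (meson half_gt_zero)
  show ?thesis
    using \<eta> assms(3) by (intro exI[of _ "min \<eta> (\<delta>/2)"]) auto
qed

lemma omega_CR:
  fixes f :: "'a::metric_space \<Rightarrow> 'a"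
  assumes "compact X" "continuous_on X f" "f ` X \<subseteq> X" "x \<in> X" "y \<in> X" "(a, b) \<in> omega_pair f x y"
  shows "a \<in> CR f X \<and> b \<in> CR f X"
proof -
  have cl: "closed X" using assms(1) compact_imp_closed by blast
  have abX: "a \<in> X" "b \<in> X" using omega_in_X[OF cl assms(3-5) assms(6)] by auto
  have "\<exists>k c d. chain_in f X \<delta> k c \<and> c 0 = a \<and> c k = a \<and> chain_in f X \<delta> k d \<and> d 0 = b \<and> d k = b"
    if \<delta>: "\<delta> > 0" for \<delta> :: real
  proof -
    obtain e where e: "e > 0" "e \<le> \<delta>/2" "\<forall>p q. p \<in> X \<longrightarrow> q \<in> X \<longrightarrow> dist p q < e \<longrightarrow> dist (f p) (f q) < \<delta>/2"
      using unif_get[OF assms(1,2) \<delta>] by blast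
    obtain n1 where n1: "dist ((f ^^ n1) x) a < e" "dist ((f ^^ n1) y) b < e"
      using assms(6) e(1) unfolding omega_pair_iff by fastforce
    obtain n2 where n2: "n2 \<ge> Suc n1" "dist ((f ^^ n2) x) a < e" "dist ((f ^^ n2) y) b < e"
      using assms(6) e(1) unfolding omega_pair_iff by fastforce
    have uc: "\<And>p q. p \<in> X \<Longrightarrow> q \<in> X \<Longrightarrow> dist p q < e \<Longrightarrow> dist (f p) (f q) < \<delta> / 2" using e by blast
    have ux: "\<And>n. (f ^^ n) x \<in> X" "\<And>n. (f ^^ n) y \<in> X" using iter_in[OF assms(3)] assms(4,5) by auto
    have nr: "\<And>n. n1 \<le> n \<Longrightarrow> \<exists>q\<in>X \<times> X. dist ((f ^^ n) x) (fst q) < e \<and> dist ((f ^^ n) y) (snd q) < e"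
    proof -
      fix n show "\<exists>q\<in>X \<times> X. dist ((f ^^ n) x) (fst q) < e \<and> dist ((f ^^ n) y) (snd q) < e"
        using ux e(1) by (intro bexI[of _ "((f ^^ n) x, (f ^^ n) y)"]) auto
    qed
    have n12: "n1 < n2" using n2 by simp
    have abS: "(a, b) \<in> X \<times> X" using abX by simp
    have "\<exists>k c d. 1 \<le> k \<and> (\<forall>i\<le>k. (c i, d i) \<in> X \<times> X) \<and>
     (\<forall>i<k. dist (f (c i)) (c (Suc i)) \<le> \<delta> \<and> dist (f (d i)) (d (Suc i)) \<le> \<delta>) \<and>
     c 0 = fst (a, b) \<and> d 0 = snd (a, b) \<and> c k = fst (a, b) \<and> d k = snd (a, b)"
      by (rule orbit_chain[where u="\<lambda>n. (f ^^ n) x" and v="\<lambda>n. (f ^^ n) y", OF uc e(2) ux _ _ nr n12 abS abS subset_refl]) (use n1 n2 in auto)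
    then obtain k c d where kcd: "1 \<le> k \<and> (\<forall>i\<le>k. (c i, d i) \<in> X \<times> X) \<and>
     (\<forall>i<k. dist (f (c i)) (c (Suc i)) \<le> \<delta> \<and> dist (f (d i)) (d (Suc i)) \<le> \<delta>) \<and>
     c 0 = fst (a, b) \<and> d 0 = snd (a, b) \<and> c k = fst (a, b) \<and> d k = snd (a, b)" by blast
    have "chain_in f X \<delta> k c" "chain_in f X \<delta> k d" using kcd by (auto simp: chain_in_def)
    moreover have "c 0 = a" "c k = a" "d 0 = b" "d k = b" using kcd by simp_all
    ultimately show ?thesis by blast
  qed
  note H = this
  have Ha: "\<forall>\<delta>>0. \<exists>k c. chain_in f X \<delta> k c \<and> c 0 = a \<and> c k = a"
  proof (intro allI impI)
    fix \<delta> :: real assume "\<delta> > 0"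
    from H[OF this] obtain k c d where "chain_in f X \<delta> k c" "c 0 = a" "c k = a" by blast
    then show "\<exists>k c. chain_in f X \<delta> k c \<and> c 0 = a \<and> c k = a" by blast
  qed
  have Hb: "\<forall>\<delta>>0. \<exists>k c. chain_in f X \<delta> k c \<and> c 0 = b \<and> c k = b"
  proof (intro allI impI)
    fix \<delta> :: real assume "\<delta> > 0"
    from H[OF this] obtain k c d where "chain_in f X \<delta> k d" "d 0 = b" "d k = b" by blast
    then show "\<exists>k c. chain_in f X \<delta> k c \<and> c 0 = b \<and> c k = b" by blast
  qed
  show ?thesis unfolding CR_def using abX Ha Hb by simp
qed

lemma omega_chain:
  fixes f :: "'a::metric_space \<Rightarrow> 'a"
  assumes "compact X" "continuous_on X f" "f ` X \<subseteq> X" "x \<in> X" "y \<in> X"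
    and A: "A \<in> omega_pair f x y" and B: "B \<in> omega_pair f x y" and \<delta>: "\<delta> > 0"
  shows "\<exists>k c d. chain_in f (CR f X) \<delta> k c \<and> chain_in f (CR f X) \<delta> k d \<and>
     c 0 = fst A \<and> d 0 = snd A \<and> c k = fst B \<and> d k = snd B"
proof -
  have cl: "closed X" using assms(1) compact_imp_closed by blast
  obtain e where e: "e > 0" "e \<le> \<delta>/2" "\<forall>p q. p \<in> X \<longrightarrow> q \<in> X \<longrightarrow> dist p q < e \<longrightarrow> dist (f p) (f q) < \<delta>/2"
    using unif_get[OF assms(1,2) \<delta>] by blast
  obtain N where N: "\<forall>n\<ge>N. \<exists>q\<in>omega_pair f x y. dist ((f ^^ n) x) (fst q) < e \<and> dist ((f ^^ n) y) (snd q) < e"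
    using eventually_near[OF assms(1,3,4,5) e(1)] by blast
  obtain n1 where n1: "n1 \<ge> N" "dist ((f ^^ n1) x) (fst A) < e" "dist ((f ^^ n1) y) (snd A) < e"
    using A e(1) unfolding omega_pair_iff by blast
  obtain n2 where n2: "n2 \<ge> Suc n1" "dist ((f ^^ n2) x) (fst B) < e" "dist ((f ^^ n2) y) (snd B) < e"
    using B e(1) unfolding omega_pair_iff by blast
  have SX: "omega_pair f x y \<subseteq> X \<times> X"
    using omega_in_X[OF cl assms(3-5)] by (auto simp: mem_Times_iff)
  have uc: "\<And>p q. p \<in> X \<Longrightarrow> q \<in> X \<Longrightarrow> dist p q < e \<Longrightarrow> dist (f p) (f q) < \<delta> / 2" using e by blast
  have ux: "\<And>n. (f ^^ n) x \<in> X" "\<And>n. (f ^^ n) y \<in> X" using iter_in[OF assms(3)] assms(4,5) by auto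
  have nr: "\<And>n. n1 \<le> n \<Longrightarrow> \<exists>q\<in>omega_pair f x y. dist ((f ^^ n) x) (fst q) < e \<and> dist ((f ^^ n) y) (snd q) < e"
    using N n1(1) by auto
  have n12: "n1 < n2" using n2 by simp
  have "\<exists>k c d. 1 \<le> k \<and> (\<forall>i\<le>k. (c i, d i) \<in> omega_pair f x y) \<and>
     (\<forall>i<k. dist (f (c i)) (c (Suc i)) \<le> \<delta> \<and> dist (f (d i)) (d (Suc i)) \<le> \<delta>) \<and>
     c 0 = fst A \<and> d 0 = snd A \<and> c k = fst B \<and> d k = snd B"
    by (rule orbit_chain[where u="\<lambda>n. (f ^^ n) x" and v="\<lambda>n. (f ^^ n) y", OF uc e(2) ux _ _ nr n12 A B SX]) (use n1 n2 in auto)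
  then obtain k c d where kcd: "1 \<le> k" "\<forall>i\<le>k. (c i, d i) \<in> omega_pair f x y"
     "\<forall>i<k. dist (f (c i)) (c (Suc i)) \<le> \<delta> \<and> dist (f (d i)) (d (Suc i)) \<le> \<delta>"
     "c 0 = fst A" "d 0 = snd A" "c k = fst B" "d k = snd B" by blast
  have "\<forall>i\<le>k. c i \<in> CR f X \<and> d i \<in> CR f X" using kcd(2) omega_CR[OF assms(1-5)] by blast
  then show ?thesis using kcd unfolding chain_in_def by (intro exI[of _ k] exI[of _ c] exI[of _ d]) auto
qed



lemma frac_bound:
  fixes a m K :: real
  assumes "a * K + m \<le> m * K" "m > 0" "K > 0"
  shows "a / m \<le> 1 - 1 / K"
proof -
  have "a \<le> (m * K - m) / K" using assms by (simp add: pos_le_divide_eq)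
  also have "\<dots> = (1 - 1/K) * m" using assms(3) by (simp add: diff_divide_distrib algebra_simps)
  finally show ?thesis using assms(2) by (simp add: pos_divide_le_eq)
qed

lemma run_exists:
  fixes P :: "nat \<Rightarrow> bool"
  assumes lim: "limsup (\<lambda>n. ereal (real (card {i. i < n \<and> P i}) / real n)) = 1"
  shows "\<exists>s\<ge>N. \<forall>j\<le>L. P (s + j)"
proof (rule ccontr)
  assume "\<not> ?thesis"
  then have H: "\<And>s. s \<ge> N \<Longrightarrow> \<exists>j. j \<le> L \<and> \<not> P (s + j)" by blast
  define g where "g t = N + (L+1)*t + (SOME j. j \<le> L \<and> \<not> P (N + (L+1)*t + j))" for t
  have g: "N + (L+1)*t \<le> g t \<and> g t \<le> N + (L+1)*t + L \<and> \<not> P (g t)" for t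
  proof -
    have "\<exists>j. j \<le> L \<and> \<not> P (N + (L+1)*t + j)" using H[of "N + (L+1)*t"] by simp
    from someI_ex[OF this] show ?thesis unfolding g_def by simp
  qed
  have ginv: "(g t - N) div (L+1) = t" for t
  proof -
    define j where "j = g t - N - (L+1)*t"
    have "g t - N = (L+1)*t + j" "j < L+1" using g[of t] unfolding j_def by auto
    moreover have "((L+1)*t + j) div (L+1) = t" using \<open>j < L+1\<close>
      by (metis Euclidean_Rings.div_eq_0_iff add.comm_neutral div_mult_self4 not_less0)
    ultimately show ?thesis by simp
  qed
  have inj: "inj_on g A" for A by (rule inj_onI) (metis ginv)
  have bound: "real (card {i. i < n \<and> P i}) / real n \<le> 1 - 1/(2*(real L+1))" if n: "n \<ge> 2*(N+L)+1" for n
  proof -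
    define M where "M = (n - N) div (L+1)"
    have c3: "(L+1)*M + L \<ge> n - N"
    proof -
      have e1: "M*(L+1) + (n - N) mod (L+1) = n - N" unfolding M_def by (rule div_mult_mod_eq)
      have e2: "(L+1)*M = M*(L+1)" by (rule mult.commute)
      have e3: "(n - N) mod (L+1) < L+1" by (rule mod_less_divisor) simp
      show ?thesis using e1 e2 e3 by linarith
    qed
    have c4: "(L+1)*M \<le> n - N" unfolding M_def by (rule times_div_less_eq_dividend)
    have sub: "g ` {..<M} \<subseteq> {i. i < n \<and> \<not> P i}"
    proof
      fix i assume "i \<in> g ` {..<M}"
      then obtain t where t: "t < M" "i = g t" by auto
      have "(L+1)*(t+1) \<le> (L+1)*M" using t(1) by (intro mult_le_mono2) simp
      moreover have "(L+1)*(t+1) = (L+1)*t + (L+1)" by (rule add_mult_distrib2[THEN trans]) simp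
      ultimately have "g t < n" using g[of t] c4 n by linarith
      then show "i \<in> {i. i < n \<and> \<not> P i}" using g[of t] t by simp
    qed
    have c1: "M \<le> card {i. i < n \<and> \<not> P i}"
    proof -
      have "card {..<M} \<le> card {i. i < n \<and> \<not> P i}" by (rule card_inj_on_le[OF inj sub]) simp
      then show ?thesis by simp
    qed
    have un: "{i. i < n \<and> P i} \<union> {i. i < n \<and> \<not> P i} = {..<n}" by (auto simp: lessThan_def)
    have c2: "card {i. i < n \<and> P i} + card {i. i < n \<and> \<not> P i} = n"
    proof -
      have "card ({i. i < n \<and> P i} \<union> {i. i < n \<and> \<not> P i}) = card {i. i < n \<and> P i} + card {i. i < n \<and> \<not> P i}"
        by (rule card_Un_disjoint) auto
      then show ?thesis unfolding un by simp
    qed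
    define Q where "Q = (L+1)*M"
    have "n - N \<le> Q + L" using c3 unfolding Q_def .
    then have "n \<le> 2*Q" using n by presburger
    then have c5: "2*(L+1)*M \<ge> n" unfolding Q_def by (simp only: mult.assoc)
    have c6: "card {i. i < n \<and> P i} * (2*(L+1)) + n \<le> n * (2*(L+1))"
    proof -
      have "card {i. i < n \<and> P i} + M \<le> n" using c1 c2 by linarith
      then have "(card {i. i < n \<and> P i} + M) * (2*(L+1)) \<le> n * (2*(L+1))" by (rule mult_le_mono1)
      moreover have "(card {i. i < n \<and> P i} + M) * (2*(L+1)) = card {i. i < n \<and> P i} * (2*(L+1)) + 2*(L+1)*M"
        by (simp add: add_mult_distrib)
      ultimately show ?thesis using c5 by linarith
    qed
    then have c7: "real (card {i. i < n \<and> P i}) * (2*(real L+1)) + real n \<le> real n * (2*(real L+1))"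
    proof -
      have "real (card {i. i < n \<and> P i} * (2*(L+1)) + n) \<le> real (n * (2*(L+1)))" using c6 by (simp only: of_nat_le_iff)
      then show ?thesis by (simp add: algebra_simps)
    qed
    have np: "real n > 0" using n by simp
    show ?thesis by (rule frac_bound[OF c7 np]) simp
  qed
  have ev: "eventually (\<lambda>n. ereal (real (card {i. i < n \<and> P i}) / real n) \<le> ereal (1 - 1/(2*(real L+1)))) sequentially"
    unfolding eventually_sequentially using bound by (intro exI[of _ "2*(N+L)+1"]) simp
  have "limsup (\<lambda>n. ereal (real (card {i. i < n \<and> P i}) / real n)) \<le> ereal (1 - 1/(2*(real L+1)))"
    by (rule Limsup_bounded[OF ev])
  moreover have "ereal (1 - 1/(2*(real L+1))) < 1" by simp
  ultimately have "limsup (\<lambda>n. ereal (real (card {i. i < n \<and> P i}) / real n)) < 1" by (rule le_less_trans)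
  then show False using lim by simp
qed



theorem propositionA1:
  fixes f :: "'a::metric_space \<Rightarrow> 'a" and X :: "'a set" and x y :: 'a
  assumes "compact X" and "continuous_on X f" and "f ` X \<subseteq> X"
    and "x \<in> X" and "y \<in> X"
    and "DC1_pair f x y"
  shows "\<exists>z w. (z, w) \<in> omega_pair f x y \<and> z \<in> CR f X \<and> w \<in> CR f X
           \<and> CR_equiv f X z w \<and> property_star f X z w"
proof -
  note as = assms(1-5)
  have cl: "closed X" using assms(1) compact_imp_closed by blast
  have close: "\<And>\<delta>. \<delta> > 0 \<Longrightarrow> limsup (\<lambda>n. ereal (real (card {i. i < n \<and> dist ((f ^^ i) x) ((f ^^ i) y) < \<delta>}) / real n)) = 1"
    using assms(6) unfolding DC1_pair_def by blast
  obtain \<delta>0 where \<delta>0: "\<delta>0 > 0" "limsup (\<lambda>n. ereal (real (card {i. i < n \<and> dist ((f ^^ i) x) ((f ^^ i) y) > \<delta>0}) / real n)) = 1"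
    using assms(6) unfolding DC1_pair_def by blast
  have "\<forall>k. \<exists>s. k \<le> s \<and> dist ((f ^^ s) x) ((f ^^ s) y) < inverse (real (Suc k))"
  proof
    fix k
    have "inverse (real (Suc k)) > 0" by simp
    from run_exists[OF close[OF this], of k 0] show "\<exists>s. k \<le> s \<and> dist ((f ^^ s) x) ((f ^^ s) y) < inverse (real (Suc k))"
      by auto
  qed
  from choice[OF this] obtain t where t: "\<And>k. k \<le> t k" "\<And>k. dist ((f ^^ t k) x) ((f ^^ t k) y) < inverse (real (Suc k))"
    by blast
  obtain r p1 p2 where rp: "strict_mono r" "(\<lambda>j. (f ^^ t (r j)) x) \<longlonglongrightarrow> p1"
      "(\<lambda>j. (f ^^ t (r j)) y) \<longlonglongrightarrow> p2" "(p1, p2) \<in> omega_pair f x y"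
    using omega_sub[OF assms(1,3,4,5) t(1)] by blast
  have "dist p1 p2 \<le> 0"
  proof (rule LIMSEQ_le[OF tendsto_dist[OF rp(2) rp(3)] LIMSEQ_inverse_real_of_nat])
    show "\<exists>N. \<forall>n\<ge>N. dist ((f ^^ t (r n)) x) ((f ^^ t (r n)) y) \<le> inverse (real (Suc n))"
    proof (intro exI allI impI)
      fix n
      have "inverse (real (Suc (r n))) \<le> inverse (real (Suc n))"
        using seq_suble[OF rp(1), of n] by (simp add: le_imp_inverse_le)
      then show "dist ((f ^^ t (r n)) x) ((f ^^ t (r n)) y) \<le> inverse (real (Suc n))"
        using t(2)[of "r n"] by linarith
    qed
  qed
  then have "p1 = p2" by simp
  with rp(4) have diag: "(p1, p1) \<in> omega_pair f x y" by simp
  have "\<forall>k. \<exists>s. k \<le> s \<and> (\<forall>j\<le>k. \<delta>0 < dist ((f ^^ (s + j)) x) ((f ^^ (s + j)) y))"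
  proof
    fix k
    from run_exists[OF \<delta>0(2), of k k] show "\<exists>s. k \<le> s \<and> (\<forall>j\<le>k. \<delta>0 < dist ((f ^^ (s + j)) x) ((f ^^ (s + j)) y))"
      by auto
  qed
  from choice[OF this] obtain s where s: "\<And>k. k \<le> s k" "\<And>k j. j \<le> k \<Longrightarrow> \<delta>0 < dist ((f ^^ (s k + j)) x) ((f ^^ (s k + j)) y)"
    by blast
  obtain r1 q1 q2 where rq: "strict_mono r1" "(\<lambda>j. (f ^^ s (r1 j)) x) \<longlonglongrightarrow> q1"
      "(\<lambda>j. (f ^^ s (r1 j)) y) \<longlonglongrightarrow> q2" "(q1, q2) \<in> omega_pair f x y" "q1 \<in> X" "q2 \<in> X"
    using omega_sub[OF assms(1,3,4,5) s(1)] by blast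
  have farq: "\<delta>0 \<le> dist ((f ^^ n) q1) ((f ^^ n) q2)" for n
  proof -
    have c: "continuous_on X (f ^^ n)" by (rule iter_cont[OF assms(2,3)])
    have a1: "(\<lambda>j. (f ^^ n) ((f ^^ s (r1 j)) x)) \<longlonglongrightarrow> (f ^^ n) q1"
      by (rule continuous_on_tendsto_compose[OF c rq(2) rq(5)]) (simp add: iter_in[OF assms(3,4)])
    have a2: "(\<lambda>j. (f ^^ n) ((f ^^ s (r1 j)) y)) \<longlonglongrightarrow> (f ^^ n) q2"
      by (rule continuous_on_tendsto_compose[OF c rq(3) rq(6)]) (simp add: iter_in[OF assms(3,5)])
    show ?thesis
    proof (rule LIMSEQ_le_const[OF tendsto_dist[OF a1 a2]])
      show "\<exists>N. \<forall>j\<ge>N. \<delta>0 \<le> dist ((f ^^ n) ((f ^^ s (r1 j)) x)) ((f ^^ n) ((f ^^ s (r1 j)) y))"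
      proof (intro exI[of _ n] allI impI)
        fix j assume "n \<le> j"
        then have "n \<le> r1 j" using seq_suble[OF rq(1), of j] by linarith
        from s(2)[OF this] have "\<delta>0 < dist ((f ^^ (s (r1 j) + n)) x) ((f ^^ (s (r1 j) + n)) y)" .
        moreover have "(f ^^ (s (r1 j) + n)) z = (f ^^ n) ((f ^^ s (r1 j)) z)" for z
          by (simp add: add.commute funpow_add)
        ultimately show "\<delta>0 \<le> dist ((f ^^ n) ((f ^^ s (r1 j)) x)) ((f ^^ n) ((f ^^ s (r1 j)) y))" by simp
      qed
    qed
  qed
  define u where "u n = (f ^^ n) q1" for n
  define v where "v n = (f ^^ n) q2" for n
  have uvO: "(u n, v n) \<in> omega_pair f x y" for n
    unfolding u_def v_def by (rule omega_inv_iter[OF cl assms(2,3,4,5) rq(4)])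
  have uvX: "u n \<in> X" "v n \<in> X" for n unfolding u_def v_def using iter_in[OF assms(3)] rq(5,6) by auto
  obtain r2 z w where zw: "strict_mono r2" "(\<lambda>j. u (r2 j)) \<longlonglongrightarrow> z" "(\<lambda>j. v (r2 j)) \<longlonglongrightarrow> w"
      "(z, w) \<in> omega_pair f q1 q2"
    using omega_sub[OF assms(1,3) rq(5,6), where t = "\<lambda>k. k"] unfolding u_def v_def by auto
  have zwO: "(z, w) \<in> omega_pair f x y"
  proof (rule omega_closed)
    fix e :: real assume "e > 0"
    then obtain n where "dist (u n) z < e" "dist (v n) w < e"
      using zw(4) unfolding omega_pair_iff u_def v_def by fastforce
    then show "\<exists>q\<in>omega_pair f x y. dist (fst q) (fst (z, w)) < e \<and> dist (snd q) (snd (z, w)) < e"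
      using uvO[of n] by (intro bexI[of _ "(u n, v n)"]) auto
  qed
  have zwCR: "z \<in> CR f X" "w \<in> CR f X" using omega_CR[OF as zwO] by auto
  have dzw: "\<delta>0 \<le> dist z w"
    by (rule LIMSEQ_le_const[OF tendsto_dist[OF zw(2) zw(3)]]) (use farq u_def v_def in auto)
  have pstar: "property_star f X z w"
    unfolding property_star_def
  proof (intro conjI zwCR exI[of _ "\<delta>0/2"] allI impI)
    show "\<delta>0/2 > 0" using \<delta>0 by simp
    fix \<delta> :: real assume \<delta>: "\<delta> > 0"
    obtain e where e: "e > 0" "e \<le> \<delta>/2" "\<forall>p q. p \<in> X \<longrightarrow> q \<in> X \<longrightarrow> dist p q < e \<longrightarrow> dist (f p) (f q) < \<delta>/2"
      using unif_get[OF assms(1,2) \<delta>] by blast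
    obtain n1 where n1: "dist (u n1) z < e" "dist (v n1) w < e"
      using zw(4) e(1) unfolding omega_pair_iff u_def v_def by fastforce
    obtain n2 where n2: "n2 \<ge> Suc n1" "dist (u n2) z < e" "dist (v n2) w < e"
      using zw(4) e(1) unfolding omega_pair_iff u_def v_def by fastforce
    define S where "S = {p \<in> omega_pair f x y. \<delta>0 \<le> dist (fst p) (snd p)}"
    have uc: "\<And>p q. p \<in> X \<Longrightarrow> q \<in> X \<Longrightarrow> dist p q < e \<Longrightarrow> dist (f p) (f q) < \<delta> / 2" using e by blast
    have nr: "\<And>n. n1 \<le> n \<Longrightarrow> \<exists>q\<in>S. dist (u n) (fst q) < e \<and> dist (v n) (snd q) < e"
    proof -
      fix n show "\<exists>q\<in>S. dist (u n) (fst q) < e \<and> dist (v n) (snd q) < e"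
        using uvO[of n] farq[of n] e(1) unfolding S_def u_def v_def by (intro bexI[of _ "(u n, v n)"]) (auto simp: u_def v_def)
    qed
    have n12: "n1 < n2" using n2 by simp
    have zwS: "(z, w) \<in> S" unfolding S_def using zwO dzw by simp
    have SX: "S \<subseteq> X \<times> X" unfolding S_def using omega_in_X[OF cl assms(3-5)] by (auto simp: mem_Times_iff)
    have us: "\<And>n. u (Suc n) = f (u n)" "\<And>n. v (Suc n) = f (v n)" unfolding u_def v_def by simp_all
    have "\<exists>k c d. 1 \<le> k \<and> (\<forall>i\<le>k. (c i, d i) \<in> S) \<and>
       (\<forall>i<k. dist (f (c i)) (c (Suc i)) \<le> \<delta> \<and> dist (f (d i)) (d (Suc i)) \<le> \<delta>) \<and>
       c 0 = fst (z, w) \<and> d 0 = snd (z, w) \<and> c k = fst (z, w) \<and> d k = snd (z, w)"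
      by (rule orbit_chain[where u=u and v=v, OF uc e(2) uvX us nr n12 zwS zwS SX]) (use n1 n2 in auto)
    then obtain k c d where kcd: "1 \<le> k \<and> (\<forall>i\<le>k. (c i, d i) \<in> S) \<and>
       (\<forall>i<k. dist (f (c i)) (c (Suc i)) \<le> \<delta> \<and> dist (f (d i)) (d (Suc i)) \<le> \<delta>) \<and>
       c 0 = fst (z, w) \<and> d 0 = snd (z, w) \<and> c k = fst (z, w) \<and> d k = snd (z, w)" by blast
    have inS: "(c i, d i) \<in> omega_pair f x y \<and> \<delta>0 \<le> dist (c i) (d i)" if "i \<le> k" for i
      using kcd that unfolding S_def by auto
    have CRi: "c i \<in> CR f X \<and> d i \<in> CR f X" if "i \<le> k" for i
      using omega_CR[OF as] inS[OF that] by blast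
    have "chain_in f (CR f X) \<delta> k c" "chain_in f (CR f X) \<delta> k d"
      unfolding chain_in_def using kcd CRi by auto
    moreover have "\<forall>i\<le>k. \<delta>0/2 < dist (c i) (d i)" using inS \<delta>0(1) by fastforce
    moreover have "c 0 = z" "c k = z" "d 0 = w" "d k = w" using kcd by simp_all
    ultimately show "\<exists>k c d. chain_in f (CR f X) \<delta> k c \<and> chain_in f (CR f X) \<delta> k d \<and>
          c 0 = z \<and> c k = z \<and> d 0 = w \<and> d k = w \<and> (\<forall>i\<le>k. \<delta>0/2 < dist (c i) (d i))"
      by blast
  qed
  have equiv: "CR_equiv f X z w"
    unfolding CR_equiv_def
  proof (intro conjI zwCR allI impI)
    fix \<delta> :: real assume \<delta>: "\<delta> > 0"
    obtain L1 c1 d1 where ch1: "chain_in f (CR f X) \<delta> L1 c1" "chain_in f (CR f X) \<delta> L1 d1"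
        "c1 0 = z" "d1 0 = w" "c1 L1 = p1" "d1 L1 = p1"
      using omega_chain[OF as zwO diag \<delta>] by auto
    obtain L2 c2 d2 where ch2: "chain_in f (CR f X) \<delta> L2 c2" "chain_in f (CR f X) \<delta> L2 d2"
        "c2 0 = p1" "d2 0 = p1" "c2 L2 = z" "d2 L2 = w"
      using omega_chain[OF as diag zwO \<delta>] by auto
    have j1: "c1 L1 = c2 0" "c1 L1 = d2 0" "d1 L1 = c2 0" "d1 L1 = d2 0" using ch1 ch2 by simp_all
    note zz = chain_append[OF ch1(1) ch2(1) j1(1)]
    note zw' = chain_append[OF ch1(1) ch2(2) j1(2)]
    note wz = chain_append[OF ch1(2) ch2(1) j1(3)]
    note ww = chain_append[OF ch1(2) ch2(2) j1(4)]
    have m0: "L1 + L2 > 0" using ch1(1) unfolding chain_in_def by simp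
    have main: "\<forall>n\<ge>1. \<exists>c d. chain_in f (CR f X) \<delta> ((L1 + L2) * n) c \<and> chain_in f (CR f X) \<delta> ((L1 + L2) * n) d \<and>
           c 0 = z \<and> c ((L1 + L2) * n) = w \<and> d 0 = w \<and> d ((L1 + L2) * n) = z"
    proof (intro allI impI)
      fix n :: nat assume n: "1 \<le> n"
      have eq: "(L1 + L2) * (n - 1) + (L1 + L2) = (L1 + L2) * n" using n
        by (cases n) (simp_all add: algebra_simps)
      obtain e1 where e1: "chain_in f (CR f X) \<delta> ((L1 + L2) * (n - 1) + (L1 + L2)) e1" "e1 0 = z"
          "e1 ((L1 + L2) * (n - 1) + (L1 + L2)) = app_chain L1 c1 d2 (L1 + L2)"
        using chain_pow_append[OF zz(1) _ _ zw'(1), of z "n - 1"] zz(2,3) zw'(2) ch1(3) ch2(5) by auto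
      obtain e2 where e2: "chain_in f (CR f X) \<delta> ((L1 + L2) * (n - 1) + (L1 + L2)) e2" "e2 0 = w"
          "e2 ((L1 + L2) * (n - 1) + (L1 + L2)) = app_chain L1 d1 c2 (L1 + L2)"
        using chain_pow_append[OF ww(1) _ _ wz(1), of w "n - 1"] ww(2,3) wz(2) ch1(4) ch2(6) by auto
      show "\<exists>c d. chain_in f (CR f X) \<delta> ((L1 + L2) * n) c \<and> chain_in f (CR f X) \<delta> ((L1 + L2) * n) d \<and>
           c 0 = z \<and> c ((L1 + L2) * n) = w \<and> d 0 = w \<and> d ((L1 + L2) * n) = z"
      proof (rule exI[of _ e1], rule exI[of _ e2], intro conjI)
        show "chain_in f (CR f X) \<delta> ((L1 + L2) * n) e1" using e1(1) unfolding eq .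
        show "chain_in f (CR f X) \<delta> ((L1 + L2) * n) e2" using e2(1) unfolding eq .
        show "e1 0 = z" using e1(2) .
        show "e2 0 = w" using e2(2) .
        show "e1 ((L1 + L2) * n) = w" using e1(3) zw'(3) ch2(6) unfolding eq by simp
        show "e2 ((L1 + L2) * n) = z" using e2(3) wz(3) ch2(5) unfolding eq by simp
      qed
    qed
    show "\<exists>m>0. \<exists>N>0. \<forall>n\<ge>N. \<exists>c d. chain_in f (CR f X) \<delta> (m * n) c \<and> chain_in f (CR f X) \<delta> (m * n) d \<and>
           c 0 = z \<and> c (m * n) = w \<and> d 0 = w \<and> d (m * n) = z"
    proof (rule exI[of _ "L1 + L2"], rule conjI[OF m0], rule exI[of _ "1::nat"], rule conjI)
      show "(0::nat) < 1" by simp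
      show "\<forall>n\<ge>1. \<exists>c d. chain_in f (CR f X) \<delta> ((L1 + L2) * n) c \<and> chain_in f (CR f X) \<delta> ((L1 + L2) * n) d \<and>
           c 0 = z \<and> c ((L1 + L2) * n) = w \<and> d 0 = w \<and> d ((L1 + L2) * n) = z" by (rule main)
    qed
  qed
  show ?thesis
  proof (rule exI[of _ z], rule exI[of _ w])
    show "(z, w) \<in> omega_pair f x y \<and> z \<in> CR f X \<and> w \<in> CR f X \<and> CR_equiv f X z w \<and> property_star f X z w"
      using zwO zwCR equiv pstar by (intro conjI)
  qed
qed

end
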